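(* In the $3$-fold Cartesian product, a related component of a good set need not be a full component: the good set $T$ is full (so $T$ is its own unique full component), while every related component of $T$ is a singleton; in particular $T$ has infinitely many related components.
   Context: Let $X_1,X_2,X_3$ be pairwise disjoint nonempty sets and $\Omega=X_1\times X_2\times X_3$, with projections $\Pi_i:\Omega\to X_i$. A set $S\subset\Omega$ is good if every function $f:S\to\mathbb C$ can be written $f(w_1,w_2,w_3)=u_1(w_1)+u_2(w_2)+u_3(w_3)$ for all $(w_1,w_2,w_3)\in S$, for some functions $u_i:X_i\to\mathbb C$. A set $S$ is full if it is a maximal good subset of $\Pi_1S\times\Pi_2S\times\Pi_3S$. For a good set $S$, the maximal full subsets of $S$ are its full components (they partition $S$). Two points $p,q$ of a good set $S$ are related if some finite full subset of $S$ contains both; this is an equivalence relation whose classes are the related components of $S$. Construction: fix pairwise distinct elements $x_1,y_1,\alpha_{5k-4},\alpha_{5k-1}$ ($k\ge1$) of $X_1$; pairwise distinct elements $x_2,y_2,\alpha_{5k-3},\alpha_{5k}$ ($k\ge1$) of $X_2$; pairwise distinct elements $x_3,z_3,\alpha_{5k-2}$ ($k\ge1$) of $X_3$. Set the convention $\alpha_{-3}:=y_2$, $\alpha_{-2}:=z_3$. Define $a_1=(x_1,x_2,x_3)$, $a_2=(y_1,y_2,x_3)$, $a_3=(y_1,x_2,z_3)$ and for $n\ge1$: $a_{5n-1}=(\alpha_{5n-4},\alpha_{5n-3},\alpha_{5n-2})$, $a_{5n}=(\alpha_{5n-1},\alpha_{5n},\alpha_{5n-2})$, $a_{5n+1}=(\alpha_{5n-4},\alpha_{5n},\alpha_{5n-7})$,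 $a_{5n+2}=(\alpha_{5n-1},\alpha_{5n-3},x_3)$, $a_{5n+3}=(x_1,\alpha_{5n-8},\alpha_{5n-2})$. Let $T=\{a_i:i\ge1\}$. *)

theory Defs
  imports Complex_Main
begin

text \<open>Points of \<Omega> = X1 \<times> X2 \<times> X3 are triples (w1, w2, w3) :: 'a \<times> 'b \<times> 'c;
  the sets X1 :: 'a set, X2 :: 'b set, X3 :: 'c set live in separate types,
  so they are automatically pairwise disjoint.\<close>

definition proj1 :: "('a \<times> 'b \<times> 'c) set \<Rightarrow> 'a set" where
  "proj1 S = (\<lambda>w. fst w) ` S"
definition proj2 :: "('a \<times> 'b \<times> 'c) set \<Rightarrow> 'b set" where
  "proj2 S = (\<lambda>w. fst (snd w)) ` S"
definition proj3 :: "('a \<times> 'b \<times> 'c) set \<Rightarrow> 'c set" where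
  "proj3 S = (\<lambda>w. snd (snd w)) ` S"

definition good :: "'a set \<Rightarrow> 'b set \<Rightarrow> 'c set \<Rightarrow> ('a \<times> 'b \<times> 'c) set \<Rightarrow> bool" where
  "good X1 X2 X3 S \<longleftrightarrow> S \<subseteq> X1 \<times> X2 \<times> X3 \<and>
     (\<forall>f :: 'a \<times> 'b \<times> 'c \<Rightarrow> complex. \<exists>u1 u2 u3.
        \<forall>w1 w2 w3. (w1, w2, w3) \<in> S \<longrightarrow> f (w1, w2, w3) = u1 w1 + u2 w2 + u3 w3)"

definition full :: "'a set \<Rightarrow> 'b set \<Rightarrow> 'c set \<Rightarrow> ('a \<times> 'b \<times> 'c) set \<Rightarrow> bool" where
  "full X1 X2 X3 S \<longleftrightarrow> good X1 X2 X3 S \<and>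
     (\<forall>S'. S \<subseteq> S' \<and> S' \<subseteq> proj1 S \<times> proj2 S \<times> proj3 S \<and> good X1 X2 X3 S' \<longrightarrow> S' = S)"

definition full_components :: "'a set \<Rightarrow> 'b set \<Rightarrow> 'c set \<Rightarrow> ('a \<times> 'b \<times> 'c) set \<Rightarrow> ('a \<times> 'b \<times> 'c) set set" where
  "full_components X1 X2 X3 S = {F. F \<subseteq> S \<and> full X1 X2 X3 F \<and>
      (\<forall>F'. F \<subseteq> F' \<and> F' \<subseteq> S \<and> full X1 X2 X3 F' \<longrightarrow> F' = F)}"

definition related :: "'a set \<Rightarrow> 'b set \<Rightarrow> 'c set \<Rightarrow> ('a \<times> 'b \<times> 'c) set \<Rightarrow> ('a \<times> 'b \<times> 'c) \<Rightarrow> ('a \<times> 'b \<times> 'c) \<Rightarrow> bool" where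
  "related X1 X2 X3 S p q \<longleftrightarrow> (\<exists>F. finite F \<and> F \<subseteq> S \<and> full X1 X2 X3 F \<and> p \<in> F \<and> q \<in> F)"

definition related_components :: "'a set \<Rightarrow> 'b set \<Rightarrow> 'c set \<Rightarrow> ('a \<times> 'b \<times> 'c) set \<Rightarrow> ('a \<times> 'b \<times> 'c) set set" where
  "related_components X1 X2 X3 S = {{q \<in> S. related X1 X2 X3 S p q} | p. p \<in> S}"

text \<open>For k \<ge> 1:
  A k = \<alpha>(5k-4), B k = \<alpha>(5k-1)  (in X1);
  C k = \<alpha>(5k-3), D k = \<alpha>(5k)    (in X2);
  E k = \<alpha>(5k-2)                  (in X3).
  Conventions \<alpha>(-3) = y2 and \<alpha>(-2) = z3 are realised by C0 0 = y2, E0 0 = z3.\<close>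

definition extC :: "'b \<Rightarrow> (nat \<Rightarrow> 'b) \<Rightarrow> nat \<Rightarrow> 'b" where
  "extC y2 C n = (if n = 0 then y2 else C n)"
definition extE :: "'c \<Rightarrow> (nat \<Rightarrow> 'c) \<Rightarrow> nat \<Rightarrow> 'c" where
  "extE z3 E n = (if n = 0 then z3 else E n)"

text \<open>The sequence a_i (i \<ge> 1).  a_1, a_2, a_3 are given explicitly; for n \<ge> 1:
  a(5n-1) = (\<alpha>(5n-4), \<alpha>(5n-3), \<alpha>(5n-2)),  a(5n) = (\<alpha>(5n-1), \<alpha>(5n), \<alpha>(5n-2)),
  a(5n+1) = (\<alpha>(5n-4), \<alpha>(5n), \<alpha>(5n-7)),  a(5n+2) = (\<alpha>(5n-1), \<alpha>(5n-3), x3),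
  a(5n+3) = (x1, \<alpha>(5n-8), \<alpha>(5n-2)).\<close>
definition aseq :: "'a \<Rightarrow> 'a \<Rightarrow> 'b \<Rightarrow> 'b \<Rightarrow> 'c \<Rightarrow> 'c \<Rightarrow>
    (nat \<Rightarrow> 'a) \<Rightarrow> (nat \<Rightarrow> 'a) \<Rightarrow> (nat \<Rightarrow> 'b) \<Rightarrow> (nat \<Rightarrow> 'b) \<Rightarrow> (nat \<Rightarrow> 'c) \<Rightarrow>
    nat \<Rightarrow> 'a \<times> 'b \<times> 'c" where
  "aseq x1 y1 x2 y2 x3 z3 A B C D E i =
    (if i = 1 then (x1, x2, x3)
     else if i = 2 then (y1, y2, x3)
     else if i = 3 then (y1, x2, z3)
     else (let n = (i + 1) div 5 in
       if (i + 1) mod 5 = 0 then (A n, C n, E n)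
       else if (i + 1) mod 5 = 1 then (B n, D n, E n)
       else if (i + 1) mod 5 = 2 then (A n, D n, extE z3 E (n - 1))
       else if (i + 1) mod 5 = 3 then (B n, C n, x3)
       else (x1, extC y2 C (n - 1), E n)))"

definition Tset :: "'a \<Rightarrow> 'a \<Rightarrow> 'b \<Rightarrow> 'b \<Rightarrow> 'c \<Rightarrow> 'c \<Rightarrow>
    (nat \<Rightarrow> 'a) \<Rightarrow> (nat \<Rightarrow> 'a) \<Rightarrow> (nat \<Rightarrow> 'b) \<Rightarrow> (nat \<Rightarrow> 'b) \<Rightarrow> (nat \<Rightarrow> 'c) \<Rightarrow>
    ('a \<times> 'b \<times> 'c) set" where
  "Tset x1 y1 x2 y2 x3 z3 A B C D E = aseq x1 y1 x2 y2 x3 z3 A B C D E ` {1..}"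

end

theory Submission imports Defs begin

definition lab1 :: "nat \<Rightarrow> nat \<times> nat" where
 "lab1 i = (if i = 1 then (0,0) else if i \<le> 3 then (1,0)
   else if (i+1) mod 5 = 0 \<or> (i+1) mod 5 = 2 then (2,(i+1) div 5)
   else if (i+1) mod 5 = 1 \<or> (i+1) mod 5 = 3 then (3,(i+1) div 5) else (0,0))"
definition lab2 :: "nat \<Rightarrow> nat \<times> nat" where
 "lab2 i = (if i = 1 \<or> i = 3 then (0,0) else if i = 2 then (2,0)
   else if (i+1) mod 5 = 0 \<or> (i+1) mod 5 = 3 then (2,(i+1) div 5)
   else if (i+1) mod 5 = 1 \<or> (i+1) mod 5 = 2 then (3,(i+1) div 5) else (2,(i+1) div 5 - 1))"
definition lab3 :: "nat \<Rightarrow> nat \<times> nat" where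
 "lab3 i = (if i \<le> 2 then (0,0) else if i = 3 then (2,0)
   else if (i+1) mod 5 = 0 \<or> (i+1) mod 5 = 1 \<or> (i+1) mod 5 = 4 then (2,(i+1) div 5)
   else if (i+1) mod 5 = 2 then (2,(i+1) div 5 - 1) else (0,0))"

lemma idx_cases:
  assumes "1 \<le> (i::nat)"
  obtains "i = 1" | "i = 2" | "i = 3" | k where "i = 5*k+4" | k where "i = 5*k+5"
   | k where "i = 5*k+6" | k where "i = 5*k+7" | k where "i = 5*k+8"
proof -
  have "i = 1 \<or> i = 2 \<or> i = 3 \<or> (\<exists>k. i = 5*k+4 \<or> i = 5*k+5 \<or> i = 5*k+6 \<or> i = 5*k+7 \<or> i = 5*k+8)"
    using assms by presburger
  then show ?thesis using that by blast
qed

lemma labs: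
  "lab1 1 = (0,0)" "lab2 1 = (0,0)" "lab3 1 = (0,0)"
  "lab1 2 = (1,0)" "lab2 2 = (2,0)" "lab3 2 = (0,0)"
  "lab1 3 = (1,0)" "lab2 3 = (0,0)" "lab3 3 = (2,0)"
  "lab1 (5*k+4) = (2,k+1)" "lab2 (5*k+4) = (2,k+1)" "lab3 (5*k+4) = (2,k+1)"
  "lab1 (5*k+5) = (3,k+1)" "lab2 (5*k+5) = (3,k+1)" "lab3 (5*k+5) = (2,k+1)"
  "lab1 (5*k+6) = (2,k+1)" "lab2 (5*k+6) = (3,k+1)" "lab3 (5*k+6) = (2,k)"
  "lab1 (5*k+7) = (3,k+1)" "lab2 (5*k+7) = (2,k+1)" "lab3 (5*k+7) = (0,0)"
  "lab1 (5*k+8) = (0,0)" "lab2 (5*k+8) = (2,k)" "lab3 (5*k+8) = (2,k+1)"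
  by (simp_all add: lab1_def lab2_def lab3_def; presburger)+

lemma labs1: "lab1 (Suc 0) = (0,0)" "lab2 (Suc 0) = (0,0)" "lab3 (Suc 0) = (0,0)"
  by (simp_all add: lab1_def lab2_def lab3_def)

lemma share12: assumes "1 \<le> j" "j < m" "lab1 j = lab1 m" "lab2 j = lab2 m" shows False
proof -
  have m: "1 \<le> m" using assms by simp
  show ?thesis by (rule idx_cases[OF assms(1)]; rule idx_cases[OF m]; insert assms; hypsubst; simp only: labs labs1; auto)
qed
lemma share13: assumes "1 \<le> j" "j < m" "lab1 j = lab1 m" "lab3 j = lab3 m" shows False
proof -
  have m: "1 \<le> m" using assms by simp
  show ?thesis by (rule idx_cases[OF assms(1)]; rule idx_cases[OF m]; insert assms; hypsubst; simp only: labs labs1; auto)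
qed
lemma share23: assumes "1 \<le> j" "j < m" "lab2 j = lab2 m" "lab3 j = lab3 m" shows False
proof -
  have m: "1 \<le> m" using assms by simp
  show ?thesis by (rule idx_cases[OF assms(1)]; rule idx_cases[OF m]; insert assms; hypsubst; simp only: labs labs1; auto)
qed

lemma ar_leaf3_3: assumes "1 \<le> j" "j < 3" shows "lab3 j \<noteq> (2,0)"
  by (rule idx_cases[OF assms(1)]; insert assms; hypsubst; simp only: labs labs1; auto)
lemma ar_leaf1_4: assumes "1 \<le> j" "j < 5*k+4" shows "lab1 j \<noteq> (2,k+1)"
  by (rule idx_cases[OF assms(1)]; insert assms; hypsubst; simp only: labs labs1; auto)
lemma ar_leaf1_5: assumes "1 \<le> j" "j < 5*k+5" shows "lab1 j \<noteq> (3,k+1)"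
  by (rule idx_cases[OF assms(1)]; insert assms; hypsubst; simp only: labs labs1; auto)
lemma ar6: assumes "1 \<le> j" "j < 5*k+6" "lab3 j = (2,k)" shows "j \<le> 5*k+3"
  by (rule idx_cases[OF assms(1)]; insert assms; hypsubst; simp only: labs labs1; auto)
lemma ar7: assumes "1 \<le> j" "j < 5*k+7" "lab3 j = (0,0)" shows "j \<le> 5*k+3"
  by (rule idx_cases[OF assms(1)]; insert assms; hypsubst; simp only: labs labs1; auto)
lemma ar8: assumes "1 \<le> j" "j < 5*k+8" "lab3 j = (2,k+1)" shows "5*k+4 \<le> j \<and> j \<le> 5*k+7"
  by (rule idx_cases[OF assms(1)]; insert assms; hypsubst; simp only: labs labs1; auto)
lemma arD1: assumes "1 \<le> l" "l \<le> 5*k+8"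
  shows "(lab1 l = (2,k+1) \<or> lab1 l = (3,k+1)) = (lab2 l = (2,k+1) \<or> lab2 l = (3,k+1))"
  by (rule idx_cases[OF assms(1)]; insert assms; hypsubst; simp only: labs labs1; auto)
lemma arD2: assumes "1 \<le> i" "i \<le> 5*k+3 \<or> i = 5*k+8" shows "lab1 i \<noteq> (2,k+1) \<and> lab1 i \<noteq> (3,k+1)"
  by (rule idx_cases[OF assms(1)]; insert assms; hypsubst; simp only: labs labs1; auto)
lemma arD3: assumes "5*k+4 \<le> j" "j \<le> 5*k+7" shows "lab2 j = (2,k+1) \<or> lab2 j = (3,k+1)"
proof -
  have "j = 5*k+4 \<or> j = 5*k+5 \<or> j = 5*k+6 \<or> j = 5*k+7" using assms by linarith
  then show ?thesis by (auto simp only: labs)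
qed

definition NF :: "('a \<times> 'b \<times> 'c) set \<Rightarrow> bool" where
  "NF S \<longleftrightarrow> (\<exists>d1 d2 d3. (\<forall>w\<in>S. d1 (fst w) + d2 (fst (snd w)) + d3 (snd (snd w)) = (0::complex)) \<and>
     (\<exists>w1\<in>proj1 S. \<exists>w2\<in>proj2 S. \<exists>w3\<in>proj3 S. d1 w1 + d2 w2 + d3 w3 \<noteq> 0))"

lemma good_subset: "good X1 X2 X3 S \<Longrightarrow> S' \<subseteq> S \<Longrightarrow> good X1 X2 X3 S'"
  unfolding good_def by blast

lemma box_sub: "S \<subseteq> proj1 S \<times> proj2 S \<times> proj3 S"
  unfolding proj1_def proj2_def proj3_def by force

lemma NF_not_full:
  assumes g: "good X1 X2 X3 S" and n: "NF S"
  shows "\<not> full X1 X2 X3 S"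
proof
  assume fu: "full X1 X2 X3 S"
  obtain d1 d2 d3 w1 w2 w3 where z: "\<forall>w\<in>S. d1 (fst w) + d2 (fst (snd w)) + d3 (snd (snd w)) = (0::complex)"
    and w: "w1 \<in> proj1 S" "w2 \<in> proj2 S" "w3 \<in> proj3 S" and nz: "d1 w1 + d2 w2 + d3 w3 \<noteq> 0"
    using n unfolding NF_def by blast
  have wS: "(w1,w2,w3) \<notin> S" using z nz by force
  have sub: "S \<subseteq> X1 \<times> X2 \<times> X3" using g unfolding good_def by blast
  have "proj1 S \<subseteq> X1" "proj2 S \<subseteq> X2" "proj3 S \<subseteq> X3"
    using sub unfolding proj1_def proj2_def proj3_def by auto
  then have s1: "insert (w1,w2,w3) S \<subseteq> X1 \<times> X2 \<times> X3" using w sub by auto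
  have s2: "insert (w1,w2,w3) S \<subseteq> proj1 S \<times> proj2 S \<times> proj3 S" using w box_sub by blast
  have "good X1 X2 X3 (insert (w1,w2,w3) S)"
    unfolding good_def
  proof (intro conjI s1 allI)
    fix f :: "'a \<times> 'b \<times> 'c \<Rightarrow> complex"
    obtain u1 u2 u3 where u: "\<forall>v1 v2 v3. (v1,v2,v3) \<in> S \<longrightarrow> f (v1,v2,v3) = u1 v1 + u2 v2 + u3 v3"
      using g unfolding good_def by blast
    define c where "c = (f (w1,w2,w3) - (u1 w1 + u2 w2 + u3 w3)) / (d1 w1 + d2 w2 + d3 w3)"
    show "\<exists>u1 u2 u3. \<forall>v1 v2 v3. (v1,v2,v3) \<in> insert (w1,w2,w3) S \<longrightarrow> f (v1,v2,v3) = u1 v1 + u2 v2 + u3 v3"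
    proof (intro exI allI impI)
      fix v1 v2 v3 assume "(v1,v2,v3) \<in> insert (w1,w2,w3) S"
      then consider "(v1,v2,v3) = (w1,w2,w3)" | "(v1,v2,v3) \<in> S" by blast
      then show "f (v1,v2,v3) = (\<lambda>x. u1 x + c * d1 x) v1 + (\<lambda>x. u2 x + c * d2 x) v2 + (\<lambda>x. u3 x + c * d3 x) v3"
      proof cases
        case 1
        have "(\<lambda>x. u1 x + c * d1 x) w1 + (\<lambda>x. u2 x + c * d2 x) w2 + (\<lambda>x. u3 x + c * d3 x) w3
            = (u1 w1 + u2 w2 + u3 w3) + c * (d1 w1 + d2 w2 + d3 w3)" by (simp add: algebra_simps)
        also have "\<dots> = f (w1,w2,w3)" using nz unfolding c_def by simp
        finally show ?thesis using 1 by simp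
      next
        case 2
        have "d1 v1 + d2 v2 + d3 v3 = 0" using z 2 by force
        have "(\<lambda>x. u1 x + c * d1 x) v1 + (\<lambda>x. u2 x + c * d2 x) v2 + (\<lambda>x. u3 x + c * d3 x) v3
            = u1 v1 + u2 v2 + u3 v3 + c * (d1 v1 + d2 v2 + d3 v3)" by (simp add: algebra_simps)
        then show ?thesis using u 2 \<open>d1 v1 + d2 v2 + d3 v3 = 0\<close> by simp
      qed
    qed
  qed
  then have "insert (w1,w2,w3) S = S" using fu s2 unfolding full_def by blast
  then show False using wS by blast
qed

lemma proj_insert: "proj1 S \<subseteq> proj1 (insert t S)" "proj2 S \<subseteq> proj2 (insert t S)" "proj3 S \<subseteq> proj3 (insert t S)"
  unfolding proj1_def proj2_def proj3_def by auto

lemma NF_ext1: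
  assumes n: "NF S" and t: "t1 \<notin> proj1 S" shows "NF (insert (t1,t2,t3) S)"
proof -
  obtain d1 d2 d3 w1 w2 w3 where z: "\<forall>w\<in>S. d1 (fst w) + d2 (fst (snd w)) + d3 (snd (snd w)) = (0::complex)"
    and w: "w1 \<in> proj1 S" "w2 \<in> proj2 S" "w3 \<in> proj3 S" and nz: "d1 w1 + d2 w2 + d3 w3 \<noteq> 0"
    using n unfolding NF_def by blast
  define e1 where "e1 = d1(t1 := - (d2 t2 + d3 t3))"
  have ne: "\<forall>w\<in>S. fst w \<noteq> t1" using t unfolding proj1_def by force
  have "w1 \<noteq> t1" using w t by blast
  show ?thesis unfolding NF_def
    apply (rule exI[of _ e1], rule exI[of _ d2], rule exI[of _ d3])
    using z ne w nz proj_insert \<open>w1 \<noteq> t1\<close> unfolding e1_def by fastforce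
qed

lemma NF_ext2:
  assumes n: "NF S" and t: "t2 \<notin> proj2 S" shows "NF (insert (t1,t2,t3) S)"
proof -
  obtain d1 d2 d3 w1 w2 w3 where z: "\<forall>w\<in>S. d1 (fst w) + d2 (fst (snd w)) + d3 (snd (snd w)) = (0::complex)"
    and w: "w1 \<in> proj1 S" "w2 \<in> proj2 S" "w3 \<in> proj3 S" and nz: "d1 w1 + d2 w2 + d3 w3 \<noteq> 0"
    using n unfolding NF_def by blast
  define e2 where "e2 = d2(t2 := - (d1 t1 + d3 t3))"
  have ne: "\<forall>w\<in>S. fst (snd w) \<noteq> t2" using t unfolding proj2_def by force
  have "w2 \<noteq> t2" using w t by blast
  show ?thesis unfolding NF_def
    apply (rule exI[of _ d1], rule exI[of _ e2], rule exI[of _ d3])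
    using z ne w nz proj_insert \<open>w2 \<noteq> t2\<close> unfolding e2_def by fastforce
qed

lemma NF_ext3:
  assumes n: "NF S" and t: "t3 \<notin> proj3 S" shows "NF (insert (t1,t2,t3) S)"
proof -
  obtain d1 d2 d3 w1 w2 w3 where z: "\<forall>w\<in>S. d1 (fst w) + d2 (fst (snd w)) + d3 (snd (snd w)) = (0::complex)"
    and w: "w1 \<in> proj1 S" "w2 \<in> proj2 S" "w3 \<in> proj3 S" and nz: "d1 w1 + d2 w2 + d3 w3 \<noteq> 0"
    using n unfolding NF_def by blast
  define e3 where "e3 = d3(t3 := - (d1 t1 + d2 t2))"
  have ne: "\<forall>w\<in>S. snd (snd w) \<noteq> t3" using t unfolding proj3_def by force
  have "w3 \<noteq> t3" using w t by blast
  show ?thesis unfolding NF_def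
    apply (rule exI[of _ d1], rule exI[of _ d2], rule exI[of _ e3])
    using z ne w nz proj_insert \<open>w3 \<noteq> t3\<close> unfolding e3_def by fastforce
qed

lemma NF_pair12:
  assumes "t1 \<noteq> p1" "t2 \<noteq> p2" shows "NF {(t1,t2,t3),(p1,p2,p3)}"
  unfolding NF_def
  apply (rule exI[of _ "\<lambda>x. if x = t1 then 1 else 0"], rule exI[of _ "\<lambda>x. if x = t2 then -1 else 0"], rule exI[of _ "\<lambda>x. 0"])
  using assms unfolding proj1_def proj2_def proj3_def by force

lemma NF_pair13:
  assumes "t1 \<noteq> p1" "t3 \<noteq> p3" shows "NF {(t1,t2,t3),(p1,p2,p3)}"
  unfolding NF_def
  apply (rule exI[of _ "\<lambda>x. if x = t1 then 1 else 0"], rule exI[of _ "\<lambda>x. 0"], rule exI[of _ "\<lambda>x. if x = t3 then -1 else 0"])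
  using assms unfolding proj1_def proj2_def proj3_def by force

lemma NF_pair23:
  assumes "t2 \<noteq> p2" "t3 \<noteq> p3" shows "NF {(t1,t2,t3),(p1,p2,p3)}"
  unfolding NF_def
  apply (rule exI[of _ "\<lambda>x. 0"], rule exI[of _ "\<lambda>x. if x = t2 then 1 else 0"], rule exI[of _ "\<lambda>x. if x = t3 then -1 else 0"])
  using assms unfolding proj1_def proj2_def proj3_def by force

lemma full_single: "p \<in> X1 \<times> X2 \<times> X3 \<Longrightarrow> full X1 X2 X3 {p}"
proof -
  assume p: "p \<in> X1 \<times> X2 \<times> X3"
  obtain p1 p2 p3 where pp: "p = (p1,p2,p3)" by (cases p) auto
  have g: "good X1 X2 X3 {p}" unfolding good_def
  proof (intro conjI allI)
    show "{p} \<subseteq> X1 \<times> X2 \<times> X3" using p by simp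
  next
    fix f :: "_ \<Rightarrow> complex"
    show "\<exists>u1 u2 u3. \<forall>w1 w2 w3. (w1, w2, w3) \<in> {p} \<longrightarrow> f (w1, w2, w3) = u1 w1 + u2 w2 + u3 w3"
      by (rule exI[of _ "\<lambda>x. f p"], rule exI[of _ "\<lambda>x. 0"], rule exI[of _ "\<lambda>x. 0"]) auto
  qed
  have "proj1 {p} \<times> proj2 {p} \<times> proj3 {p} = {p}" unfolding proj1_def proj2_def proj3_def pp by simp
  then show ?thesis unfolding full_def using g by auto
qed

locale TC =
  fixes X1 :: "'a set" and X2 :: "'b set" and X3 :: "'c set"
    and x1 y1 :: 'a and x2 y2 :: 'b and x3 z3 :: 'c
    and A B :: "nat \<Rightarrow> 'a" and C D :: "nat \<Rightarrow> 'b" and E :: "nat \<Rightarrow> 'c"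
  assumes inX1: "x1 \<in> X1" "y1 \<in> X1" "A ` {1..} \<subseteq> X1" "B ` {1..} \<subseteq> X1"
    and inX2: "x2 \<in> X2" "y2 \<in> X2" "C ` {1..} \<subseteq> X2" "D ` {1..} \<subseteq> X2"
    and inX3: "x3 \<in> X3" "z3 \<in> X3" "E ` {1..} \<subseteq> X3"
    and dist1: "x1 \<noteq> y1" "x1 \<notin> A ` {1..}" "x1 \<notin> B ` {1..}" "y1 \<notin> A ` {1..}" "y1 \<notin> B ` {1..}"
      "inj_on A {1..}" "inj_on B {1..}" "A ` {1..} \<inter> B ` {1..} = {}"
    and dist2: "x2 \<noteq> y2" "x2 \<notin> C ` {1..}" "x2 \<notin> D ` {1..}" "y2 \<notin> C ` {1..}" "y2 \<notin> D ` {1..}"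
      "inj_on C {1..}" "inj_on D {1..}" "C ` {1..} \<inter> D ` {1..} = {}"
    and dist3: "x3 \<noteq> z3" "x3 \<notin> E ` {1..}" "z3 \<notin> E ` {1..}" "inj_on E {1..}"
begin

abbreviation "a \<equiv> aseq x1 y1 x2 y2 x3 z3 A B C D E"

lemma a_small: "a 1 = (x1, x2, x3)" "a (Suc 0) = (x1, x2, x3)" "a 2 = (y1, y2, x3)" "a 3 = (y1, x2, z3)"
  by (simp_all add: aseq_def)

lemma a_blk:
  "a (5*k+4) = (A (k+1), C (k+1), E (k+1))"
  "a (5*k+5) = (B (k+1), D (k+1), E (k+1))"
  "a (5*k+6) = (A (k+1), D (k+1), extE z3 E k)"
  "a (5*k+7) = (B (k+1), C (k+1), x3)"
  "a (5*k+8) = (x1, extC y2 C k, E (k+1))"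
proof -
  have h4: "(5*k+4+1) div 5 = k+1" "(5*k+4+1) mod 5 = 0" by presburger+
  have h5: "(5*k+5+1) div 5 = k+1" "(5*k+5+1) mod 5 = 1" by presburger+
  have h6: "(5*k+6+1) div 5 = k+1" "(5*k+6+1) mod 5 = 2" by presburger+
  have h7: "(5*k+7+1) div 5 = k+1" "(5*k+7+1) mod 5 = 3" by presburger+
  have h8: "(5*k+8+1) div 5 = k+1" "(5*k+8+1) mod 5 = 4" by presburger+
  show "a (5*k+4) = (A (k+1), C (k+1), E (k+1))" unfolding aseq_def Let_def h4 by simp
  show "a (5*k+5) = (B (k+1), D (k+1), E (k+1))" unfolding aseq_def Let_def h5 by simp
  show "a (5*k+6) = (A (k+1), D (k+1), extE z3 E k)" unfolding aseq_def Let_def h6 by simp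
  show "a (5*k+7) = (B (k+1), C (k+1), x3)" unfolding aseq_def Let_def h7 by simp
  show "a (5*k+8) = (x1, extC y2 C k, E (k+1))" unfolding aseq_def Let_def h8 by simp
qed

definition V1 :: "nat \<times> nat \<Rightarrow> 'a" where
  "V1 l = (if fst l = 0 then x1 else if fst l = 1 then y1 else if fst l = 2 then A (snd l) else B (snd l))"
definition V2 :: "nat \<times> nat \<Rightarrow> 'b" where
  "V2 l = (if fst l = 0 then x2 else if fst l = 2 then extC y2 C (snd l) else D (snd l))"
definition V3 :: "nat \<times> nat \<Rightarrow> 'c" where
  "V3 l = (if fst l = 0 then x3 else extE z3 E (snd l))"

lemma a_lab: assumes "1 \<le> i" shows "a i = (V1 (lab1 i), V2 (lab2 i), V3 (lab3 i))"
  by (rule idx_cases[OF assms]; hypsubst; simp only: a_blk a_small labs labs1;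
      simp add: V1_def V2_def V3_def extC_def extE_def)

definition "valid1 l \<longleftrightarrow> l = (0,0) \<or> l = (1,0) \<or> ((fst l = 2 \<or> fst l = 3) \<and> snd l \<ge> 1)"
definition "valid2 l \<longleftrightarrow> l = (0,0) \<or> fst l = 2 \<or> (fst l = 3 \<and> snd l \<ge> 1)"
definition "valid3 l \<longleftrightarrow> l = (0,0) \<or> fst l = 2"

lemma valid_lab: assumes "1 \<le> i" shows "valid1 (lab1 i)" "valid2 (lab2 i)" "valid3 (lab3 i)"
  by (rule idx_cases[OF assms]; hypsubst; simp only: labs labs1; simp add: valid1_def valid2_def valid3_def)+

lemma V1_inj: assumes "valid1 l" "valid1 l'" "V1 l = V1 l'" shows "l = l'"
proof -
  obtain t n where l: "l = (t,n)" by force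
  obtain t' n' where l': "l' = (t',n')" by force
  have iA: "A n = A n' \<Longrightarrow> n \<ge> 1 \<Longrightarrow> n' \<ge> 1 \<Longrightarrow> n = n'" for n n'
    using dist1(6) by (auto dest: inj_onD)
  have iB: "B n = B n' \<Longrightarrow> n \<ge> 1 \<Longrightarrow> n' \<ge> 1 \<Longrightarrow> n = n'" for n n'
    using dist1(7) by (auto dest: inj_onD)
  have dAB: "A n \<noteq> B n'" if "n \<ge> 1" "n' \<ge> 1" for n n' using dist1(8) that by auto
  have d1: "x1 \<noteq> A n" "x1 \<noteq> B n" "y1 \<noteq> A n" "y1 \<noteq> B n" if "n \<ge> 1" for n
    using dist1(2-5) that by auto
  show ?thesis using assms iA iB dAB d1 dist1(1) unfolding l l' valid1_def V1_def
    by (auto split: if_splits) (metis)+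
qed


lemma V2_inj: assumes "valid2 l" "valid2 l'" "V2 l = V2 l'" shows "l = l'"
proof -
  obtain t n where l: "l = (t,n)" by force
  obtain t' n' where l': "l' = (t',n')" by force
  have iC: "C n = C n' \<Longrightarrow> n \<ge> 1 \<Longrightarrow> n' \<ge> 1 \<Longrightarrow> n = n'" for n n'
    using dist2(6) by (auto dest: inj_onD)
  have iD: "D n = D n' \<Longrightarrow> n \<ge> 1 \<Longrightarrow> n' \<ge> 1 \<Longrightarrow> n = n'" for n n'
    using dist2(7) by (auto dest: inj_onD)
  have dCD: "C n \<noteq> D n'" if "n \<ge> 1" "n' \<ge> 1" for n n' using dist2(8) that by auto
  have d1: "x2 \<noteq> C n" "x2 \<noteq> D n" "y2 \<noteq> C n" "y2 \<noteq> D n" if "n \<ge> 1" for n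
    using dist2(2-5) that by auto
  have eC: "extC y2 C n = extC y2 C n' \<Longrightarrow> n = n'" for n n'
    using iC d1(3)[of n] d1(3)[of n'] by (cases "n = 0"; cases "n' = 0"; auto simp: extC_def)
  have eCx: "extC y2 C n \<noteq> x2" for n using d1(1)[of n] dist2(1) by (cases "n = 0") (auto simp: extC_def)
  have eCD: "extC y2 C n \<noteq> D n'" if "n' \<ge> 1" for n n' using d1 dCD that by (auto simp: extC_def)
  show ?thesis using assms iD eC eCx eCD d1 unfolding l l' valid2_def V2_def
    by (auto split: if_splits) (metis)+
qed

lemma V3_inj: assumes "valid3 l" "valid3 l'" "V3 l = V3 l'" shows "l = l'"
proof -
  obtain t n where l: "l = (t,n)" by force
  obtain t' n' where l': "l' = (t',n')" by force
  have iE: "E n = E n' \<Longrightarrow> n \<ge> 1 \<Longrightarrow> n' \<ge> 1 \<Longrightarrow> n = n'" for n n'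
    using dist3(4) by (auto dest: inj_onD)
  have d1: "x3 \<noteq> E n" "z3 \<noteq> E n" if "n \<ge> 1" for n
    using dist3(2-3) that by auto
  have eE: "extE z3 E n = extE z3 E n' \<Longrightarrow> n = n'" for n n'
    using iE d1(2)[of n] d1(2)[of n'] by (cases "n = 0"; cases "n' = 0"; auto simp: extE_def)
  have eEx: "extE z3 E n \<noteq> x3" for n using d1(1)[of n] dist3(1) by (cases "n = 0") (auto simp: extE_def)
  show ?thesis using assms eE eEx unfolding l l' valid3_def V3_def
    by (auto split: if_splits)
qed

lemma coord_eq:
  assumes "1 \<le> i" "1 \<le> j"
  shows "fst (a i) = fst (a j) \<longleftrightarrow> lab1 i = lab1 j"
    "fst (snd (a i)) = fst (snd (a j)) \<longleftrightarrow> lab2 i = lab2 j"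
    "snd (snd (a i)) = snd (snd (a j)) \<longleftrightarrow> lab3 i = lab3 j"
proof -
  have i: "fst (a i) = V1 (lab1 i)" "fst (snd (a i)) = V2 (lab2 i)" "snd (snd (a i)) = V3 (lab3 i)"
    using a_lab[OF assms(1)] by auto
  have j: "fst (a j) = V1 (lab1 j)" "fst (snd (a j)) = V2 (lab2 j)" "snd (snd (a j)) = V3 (lab3 j)"
    using a_lab[OF assms(2)] by auto
  show "fst (a i) = fst (a j) \<longleftrightarrow> lab1 i = lab1 j"
    unfolding i j using V1_inj valid_lab[OF assms(1)] valid_lab[OF assms(2)] by metis
  show "fst (snd (a i)) = fst (snd (a j)) \<longleftrightarrow> lab2 i = lab2 j"
    unfolding i j using V2_inj valid_lab[OF assms(1)] valid_lab[OF assms(2)] by metis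
  show "snd (snd (a i)) = snd (snd (a j)) \<longleftrightarrow> lab3 i = lab3 j"
    unfolding i j using V3_inj valid_lab[OF assms(1)] valid_lab[OF assms(2)] by metis
qed

lemma a_inj: "inj_on a {1..}"
proof (rule inj_onI)
  fix i j assume i: "i \<in> {1::nat..}" and j: "j \<in> {1::nat..}" and e: "a i = a j"
  show "i = j"
  proof (rule ccontr)
    assume "i \<noteq> j"
    then consider "i < j" | "j < i" by linarith
    then show False
    proof cases
      case 1 then show False using share12[of i j] coord_eq[of i j] i j e by auto
    next
      case 2 then show False using share12[of j i] coord_eq[of j i] i j e by auto
    qed
  qed
qed


lemma NF_D:
  assumes S: "S \<subseteq> a ` {1..5*k+8}" and j: "5*k+4 \<le> j" "j \<le> 5*k+7" "a j \<in> S"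
    and i: "1 \<le> i" "i \<le> 5*k+3 \<or> i = 5*k+8" "a i \<in> S"
  shows "NF S"
proof -
  define d1 where "d1 = (\<lambda>v. if v = A (k+1) \<or> v = B (k+1) then -1 else (0::complex))"
  define d2 where "d2 = (\<lambda>v. if v = C (k+1) \<or> v = D (k+1) then 1 else (0::complex))"
  have eA: "A (k+1) = fst (a (5*k+4))" "B (k+1) = fst (a (5*k+5))"
    "C (k+1) = fst (snd (a (5*k+4)))" "D (k+1) = fst (snd (a (5*k+5)))" by (simp_all only: a_blk fst_conv snd_conv)
  have k1: "d1 (fst (a l)) = (if lab1 l = (2,k+1) \<or> lab1 l = (3,k+1) then -1 else 0)" if "1 \<le> l" for l
  proof -
    have "fst (a l) = fst (a (5*k+4)) \<longleftrightarrow> lab1 l = (2,k+1)"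
      using coord_eq(1)[OF that, of "5*k+4"] by (simp only: labs; simp)
    moreover have "fst (a l) = fst (a (5*k+5)) \<longleftrightarrow> lab1 l = (3,k+1)"
      using coord_eq(1)[OF that, of "5*k+5"] by (simp only: labs; simp)
    ultimately show ?thesis unfolding d1_def eA by simp
  qed
  have k2: "d2 (fst (snd (a l))) = (if lab2 l = (2,k+1) \<or> lab2 l = (3,k+1) then 1 else 0)" if "1 \<le> l" for l
  proof -
    have "fst (snd (a l)) = fst (snd (a (5*k+4))) \<longleftrightarrow> lab2 l = (2,k+1)"
      using coord_eq(2)[OF that, of "5*k+4"] by (simp only: labs; simp)
    moreover have "fst (snd (a l)) = fst (snd (a (5*k+5))) \<longleftrightarrow> lab2 l = (3,k+1)"
      using coord_eq(2)[OF that, of "5*k+5"] by (simp only: labs; simp)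
    ultimately show ?thesis unfolding d2_def eA by simp
  qed
  have van: "\<forall>w\<in>S. d1 (fst w) + d2 (fst (snd w)) + (\<lambda>x. 0) (snd (snd w)) = 0"
  proof
    fix w assume "w \<in> S"
    then have "w \<in> a ` {1..5*k+8}" using S by blast
    then obtain l where l0: "l \<in> {1..5*k+8}" "w = a l" by (rule imageE) blast
    then have l: "1 \<le> l" "l \<le> 5*k+8" "w = a l" by auto
    show "d1 (fst w) + d2 (fst (snd w)) + (\<lambda>x. 0) (snd (snd w)) = 0"
      using arD1[OF l(1,2)] unfolding l(3) k1[OF l(1)] k2[OF l(1)] by auto
  qed
  have j1: "1 \<le> j" using j by simp
  have w: "fst (a i) \<in> proj1 S" "fst (snd (a j)) \<in> proj2 S" "snd (snd (a i)) \<in> proj3 S"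
    using i j unfolding proj1_def proj2_def proj3_def by auto
  have "d1 (fst (a i)) + d2 (fst (snd (a j))) + (\<lambda>x. 0) (snd (snd (a i))) = 1"
    using arD2[OF i(1,2)] arD3[OF j(1,2)] unfolding k1[OF i(1)] k2[OF j1] by auto
  then have nz: "d1 (fst (a i)) + d2 (fst (snd (a j))) + (\<lambda>x. 0) (snd (snd (a i))) \<noteq> 0" by simp
  show ?thesis unfolding NF_def
    apply (rule exI[of _ d1], rule exI[of _ d2], rule exI[of _ "\<lambda>x. 0"])
    apply (rule conjI)
    subgoal using van by simp
    subgoal using w nz by blast
    done
qed


lemma triple: "x = (fst x, fst (snd x), snd (snd x))" by simp

lemma NF_main: "finite I \<Longrightarrow> I \<subseteq> {1..} \<Longrightarrow> 2 \<le> card I \<Longrightarrow> NF (a ` I)"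
proof (induction "card I" arbitrary: I rule: less_induct)
  case less
  have ne: "I \<noteq> {}" using less.prems by auto
  define m where "m = Max I"
  have mI: "m \<in> I" unfolding m_def using Max_in[OF less.prems(1) ne] .
  define I' where "I' = I - {m}"
  have I'lt: "1 \<le> j \<and> j < m" if "j \<in> I'" for j
  proof -
    have "j \<le> m" using that Max_ge[OF less.prems(1)] unfolding m_def I'_def by auto
    then show ?thesis using that less.prems(2) unfolding I'_def by auto
  qed
  have m1: "1 \<le> m" using mI less.prems(2) by auto
  have aI: "a ` I = insert (a m) (a ` I')" unfolding I'_def using mI by auto
  have fI': "finite I'" using less.prems(1) unfolding I'_def by auto
  have cI': "card I' = card I - 1" unfolding I'_def using mI less.prems(1) by (simp add: card_Diff_singleton)
  have I'sub: "I' \<subseteq> {1..}" using less.prems(2) unfolding I'_def by auto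
  have Ssub: "a ` I \<subseteq> a ` {1..m}"
  proof -
    have "I \<subseteq> {1..m}" using less.prems(2) Max_ge[OF less.prems(1)] unfolding m_def by auto
    then show ?thesis by auto
  qed
  have am: "a m = (fst (a m), fst (snd (a m)), snd (snd (a m)))" by simp
  have ext1: "NF (a ` I)" if h: "\<forall>j\<in>I'. lab1 j \<noteq> lab1 m" and n: "NF (a ` I')"
  proof -
    have "fst (a m) \<notin> proj1 (a ` I')"
    proof
      assume "fst (a m) \<in> proj1 (a ` I')"
      then obtain j where "j \<in> I'" "fst (a j) = fst (a m)" unfolding proj1_def by auto
      then show False using h coord_eq(1)[of j m] I'lt m1 by auto
    qed
    then show ?thesis unfolding aI by (subst am) (rule NF_ext1[OF n])
  qed
  have ext3: "NF (a ` I)" if h: "\<forall>j\<in>I'. lab3 j \<noteq> lab3 m" and n: "NF (a ` I')"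
  proof -
    have "snd (snd (a m)) \<notin> proj3 (a ` I')"
    proof
      assume "snd (snd (a m)) \<in> proj3 (a ` I')"
      then obtain j where "j \<in> I'" "snd (snd (a j)) = snd (snd (a m))" unfolding proj3_def by auto
      then show False using h coord_eq(3)[of j m] I'lt m1 by auto
    qed
    then show ?thesis unfolding aI by (subst am) (rule NF_ext3[OF n])
  qed
  show ?case
  proof (cases "card I = 2")
    case True
    then have "card I' = 1" using cI' by simp
    then obtain j where Ij: "I' = {j}" using card_1_singletonE by blast
    then have j: "1 \<le> j" "j < m" using I'lt by auto
    have aI2: "a ` I = {(fst (a m), fst (snd (a m)), snd (snd (a m))), (fst (a j), fst (snd (a j)), snd (snd (a j)))}"
      unfolding aI Ij by simp
    have c: "fst (a m) = fst (a j) \<longleftrightarrow> lab1 j = lab1 m" "fst (snd (a m)) = fst (snd (a j)) \<longleftrightarrow> lab2 j = lab2 m"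
      "snd (snd (a m)) = snd (snd (a j)) \<longleftrightarrow> lab3 j = lab3 m"
      using coord_eq[OF m1 j(1)] by auto
    show ?thesis unfolding aI2
    proof (cases "lab1 j = lab1 m")
      case True
      then show "NF {(fst (a m), fst (snd (a m)), snd (snd (a m))), (fst (a j), fst (snd (a j)), snd (snd (a j)))}"
        using share12[OF j] share13[OF j] c by (intro NF_pair23) auto
    next
      case False
      show "NF {(fst (a m), fst (snd (a m)), snd (snd (a m))), (fst (a j), fst (snd (a j)), snd (snd (a j)))}"
      proof (cases "lab2 j = lab2 m")
        case True
        then show ?thesis using False share23[OF j] c by (intro NF_pair13) auto
      next
        case F2: False
        then show ?thesis using False c by (intro NF_pair12) auto
      qed
    qed
  next
    case False
    then have c2: "2 \<le> card I'" using cI' less.prems(3) by simp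
    have IH: "NF (a ` I')"
      using less.hyps[of I'] cI' c2 fI' I'sub by simp
    show ?thesis
    proof (rule idx_cases[OF m1])
      assume "m = 1" then show ?thesis using c2 I'lt by (metis card.empty ex_in_conv less_le_trans not_less numeral_le_one_iff semiring_norm(69) zero_le)
    next
      assume "m = 2"
      then have "I' \<subseteq> {1}" using I'lt by force
      then have "card I' \<le> 1" by (metis card.empty card.insert empty_iff finite.emptyI le_less subset_singletonD insert_absorb order_refl one_le_numeral card_mono finite.insertI is_singletonI is_singleton_altdef)
      then show ?thesis using c2 by simp
    next
      assume m3: "m = 3"
      have "\<forall>j\<in>I'. lab3 j \<noteq> lab3 m" using I'lt ar_leaf3_3 unfolding m3 by (simp only: labs) auto
      then show ?thesis using ext3 IH by blast
    next
      fix k assume mk: "m = 5*k+4"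
      have "\<forall>j\<in>I'. lab1 j \<noteq> lab1 m" using I'lt ar_leaf1_4 unfolding mk by (simp only: labs) auto
      then show ?thesis using ext1 IH by blast
    next
      fix k assume mk: "m = 5*k+5"
      have "\<forall>j\<in>I'. lab1 j \<noteq> lab1 m" using I'lt ar_leaf1_5 unfolding mk by (simp only: labs) auto
      then show ?thesis using ext1 IH by blast
    next
      fix k assume mk: "m = 5*k+6"
      show ?thesis
      proof (cases "\<exists>j\<in>I'. lab3 j = lab3 m")
        case True
        then obtain j where j: "j \<in> I'" "lab3 j = (2,k)" unfolding mk by (auto simp only: labs)
        have "j \<le> 5*k+3" using ar6[of j k] j I'lt[OF j(1)] unfolding mk by auto
        moreover have "a ` I \<subseteq> a ` {1..5*k+8}" using Ssub unfolding mk by auto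
        ultimately show ?thesis using NF_D[of "a ` I" k m j] mI j(1) I'lt[OF j(1)] unfolding mk I'_def by auto
      next
        case False
        then show ?thesis using ext3 IH by blast
      qed
    next
      fix k assume mk: "m = 5*k+7"
      show ?thesis
      proof (cases "\<exists>j\<in>I'. lab3 j = lab3 m")
        case True
        then obtain j where j: "j \<in> I'" "lab3 j = (0,0)" unfolding mk by (auto simp only: labs)
        have "j \<le> 5*k+3" using ar7[of j k] j I'lt[OF j(1)] unfolding mk by auto
        moreover have "a ` I \<subseteq> a ` {1..5*k+8}" using Ssub unfolding mk by auto
        ultimately show ?thesis using NF_D[of "a ` I" k m j] mI j(1) I'lt[OF j(1)] unfolding mk I'_def by auto
      next
        case False
        then show ?thesis using ext3 IH by blast
      qed
    next
      fix k assume mk: "m = 5*k+8"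
      show ?thesis
      proof (cases "\<exists>j\<in>I'. lab3 j = lab3 m")
        case True
        then obtain j where j: "j \<in> I'" "lab3 j = (2,k+1)" unfolding mk by (auto simp only: labs)
        have "5*k+4 \<le> j \<and> j \<le> 5*k+7" using ar8[of j k] j I'lt[OF j(1)] unfolding mk by auto
        moreover have "a ` I \<subseteq> a ` {1..5*k+8}" using Ssub unfolding mk by auto
        ultimately show ?thesis using NF_D[of "a ` I" k j m] mI j(1) I'lt[OF j(1)] unfolding mk I'_def by auto
      next
        case False
        then show ?thesis using ext3 IH by blast
      qed
    qed
  qed
qed


lemma zero_on_T:
  fixes u1 :: "'a \<Rightarrow> complex" and u2 :: "'b \<Rightarrow> complex" and u3 :: "'c \<Rightarrow> complex"
  assumes h: "\<And>i. 1 \<le> i \<Longrightarrow> u1 (fst (a i)) + u2 (fst (snd (a i))) + u3 (snd (snd (a i))) = 0"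
  shows "\<And>i. 1 \<le> i \<Longrightarrow> u1 (fst (a i)) = u1 x1"
    "\<And>i. 1 \<le> i \<Longrightarrow> u2 (fst (snd (a i))) = u2 x2"
    "\<And>i. 1 \<le> i \<Longrightarrow> u3 (snd (snd (a i))) = u3 x3"
    "u1 x1 + u2 x2 + u3 x3 = 0"
proof -
  have b1: "u1 (A (k+1)) + u2 (C (k+1)) + u3 (E (k+1)) = 0" for k using h[of "5*k+4"] by (simp only: a_blk) simp
  have b2: "u1 (B (k+1)) + u2 (D (k+1)) + u3 (E (k+1)) = 0" for k using h[of "5*k+5"] by (simp only: a_blk) simp
  have b3: "u1 (A (k+1)) + u2 (D (k+1)) + u3 (extE z3 E k) = 0" for k using h[of "5*k+6"] by (simp only: a_blk) simp
  have b4: "u1 (B (k+1)) + u2 (C (k+1)) + u3 x3 = 0" for k using h[of "5*k+7"] by (simp only: a_blk) simp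
  have b5: "u1 x1 + u2 (extC y2 C k) + u3 (E (k+1)) = 0" for k using h[of "5*k+8"] by (simp only: a_blk) simp
  have s1: "u1 x1 + u2 x2 + u3 x3 = 0" using h[of 1] by (simp add: a_small)
  have s2: "u1 y1 + u2 y2 + u3 x3 = 0" using h[of 2] by (simp add: a_small)
  have s3: "u1 y1 + u2 x2 + u3 z3 = 0" using h[of 3] by (simp add: a_small)
  have rel: "u3 (extE z3 E k) - u3 x3 = 2 * (u3 (E (k+1)) - u3 x3)" for k
    using b1[of k] b2[of k] b3[of k] b4[of k] by algebra
  have crel: "u2 (extC y2 C k) - u2 x2 = - (u3 (E (k+1)) - u3 x3)" for k
    using b5[of k] s1 by algebra
  have "3 * (u3 (E 1) - u3 x3) = 0"
    using rel[of 0] crel[of 0] s2 s3 by (simp add: extE_def extC_def) algebra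
  then have E1: "u3 (E 1) = u3 x3" by simp
  have EE: "u3 (E (k+1)) = u3 x3" for k
  proof (induction k)
    case 0 then show ?case using E1 by simp
  next
    case (Suc k)
    have "u3 (extE z3 E (k+1)) = u3 (E (k+1))" by (simp add: extE_def)
    then show ?case using rel[of "k+1"] Suc by simp
  qed
  have Ez: "u3 z3 = u3 x3" using rel[of 0] E1 by (simp add: extE_def)
  have CC: "u2 (extC y2 C k) = u2 x2" for k using crel[of k] EE[of k] by simp
  have Cs: "u2 (C (k+1)) = u2 x2" for k using CC[of "k+1"] by (simp add: extC_def)
  have y2: "u2 y2 = u2 x2" using CC[of 0] by (simp add: extC_def)
  have AA: "u1 (A (k+1)) = u1 x1" for k using b1[of k] Cs[of k] EE[of k] s1 by algebra
  have BB: "u1 (B (k+1)) = u1 x1" for k using b4[of k] Cs[of k] s1 by algebra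
  have DD: "u2 (D (k+1)) = u2 x2" for k using b2[of k] BB[of k] EE[of k] s1 by algebra
  have y1: "u1 y1 = u1 x1" using s2 s1 y2 by algebra
  have EE': "u3 (extE z3 E k) = u3 x3" for k using EE[of "k-1"] Ez by (cases k) (auto simp: extE_def)
  show "u1 (fst (a i)) = u1 x1" if "1 \<le> i" for i
    by (rule idx_cases[OF that]; hypsubst; simp only: a_blk a_small fst_conv snd_conv AA BB y1; simp)
  show "u2 (fst (snd (a i))) = u2 x2" if "1 \<le> i" for i
    by (rule idx_cases[OF that]; hypsubst; simp only: a_blk a_small fst_conv snd_conv Cs DD y2 CC; simp)
  show "u3 (snd (snd (a i))) = u3 x3" if "1 \<le> i" for i
    by (rule idx_cases[OF that]; hypsubst; simp only: a_blk a_small fst_conv snd_conv EE EE' Ez; simp)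
  show "u1 x1 + u2 x2 + u3 x3 = 0" by (rule s1)
qed


lemma T_sub: "1 \<le> i \<Longrightarrow> a i \<in> X1 \<times> X2 \<times> X3"
proof -
  assume i: "1 \<le> i"
  have A': "A (Suc k) \<in> X1" "B (Suc k) \<in> X1" "C (Suc k) \<in> X2" "D (Suc k) \<in> X2" "E (Suc k) \<in> X3" for k
    using inX1 inX2 inX3 by auto
  have eC: "extC y2 C k \<in> X2" for k using inX2 by (cases k) (auto simp: extC_def)
  have eE: "extE z3 E k \<in> X3" for k using inX3 by (cases k) (auto simp: extE_def)
  show ?thesis
    by (rule idx_cases[OF i]; hypsubst; simp only: a_blk a_small; simp add: A' eC eE inX1 inX2 inX3)
qed

lemma good_T: "good X1 X2 X3 (a ` {1..})"
  unfolding good_def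
proof (intro conjI allI)
  show "a ` {1..} \<subseteq> X1 \<times> X2 \<times> X3" by (rule image_subsetI) (rule T_sub, simp)
next
  fix f :: "'a \<times> 'b \<times> 'c \<Rightarrow> complex"
  define F where "F i = f (a i)" for i
  define H where "H k = F (5*k+4) + F (5*k+5) - F (5*k+6) - F (5*k+7)" for k
  define e0 where "e0 = (2/3) * (F 3 - F 1 - F 2 + F 8) - H 0 / 3"
  define e where "e = rec_nat e0 (\<lambda>k ek. F (5*k+8) - (2 * F (5*k+8) - ek - H k) / 2)"
  define c where "c k = (2 * F (5*k+8) - e k - H k) / 2" for k
  define al where "al k = F (5*k+4) - c (k+1) - e (k+1)" for k
  define dd where "dd k = F (5*k+6) - al k - e k" for k
  define be where "be k = F (5*k+7) - c (k+1)" for k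
  define u1 where "u1 v = (if v = x1 then 0 else if v = y1 then F 2 - c 0
      else if v \<in> A ` {1..} then al (the_inv_into {1..} A v - 1)
      else if v \<in> B ` {1..} then be (the_inv_into {1..} B v - 1) else 0)" for v
  define u2 where "u2 v = (if v = x2 then F 1 else if v = y2 then c 0
      else if v \<in> C ` {1..} then c (the_inv_into {1..} C v)
      else if v \<in> D ` {1..} then dd (the_inv_into {1..} D v - 1) else 0)" for v
  define u3 where "u3 v = (if v = x3 then 0 else if v = z3 then e 0
      else if v \<in> E ` {1..} then e (the_inv_into {1..} E v) else 0)" for v
  have e0': "e 0 = e0" unfolding e_def by simp
  have erec: "e (Suc k) = F (5*k+8) - c k" for k unfolding e_def c_def by simp
  have uA: "u1 (A (k+1)) = al k" for k
  proof -
    have "A (k+1) \<noteq> x1" "A (k+1) \<noteq> y1" using dist1(2,4) by auto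
    moreover have "the_inv_into {1..} A (A (k+1)) = k+1" using the_inv_into_f_f[OF dist1(6)] by simp
    ultimately show ?thesis unfolding u1_def by auto
  qed
  have uB: "u1 (B (k+1)) = be k" for k
  proof -
    have "B (k+1) \<noteq> x1" "B (k+1) \<noteq> y1" "B (k+1) \<notin> A ` {1..}" using dist1(3,5,8) by auto
    moreover have "the_inv_into {1..} B (B (k+1)) = k+1" using the_inv_into_f_f[OF dist1(7)] by simp
    ultimately show ?thesis unfolding u1_def by auto
  qed
  have uC: "u2 (extC y2 C k) = c k" for k
  proof (cases k)
    case 0 then show ?thesis using dist2(1) unfolding u2_def extC_def by auto
  next
    case (Suc k')
    have "C k \<noteq> x2" "C k \<noteq> y2" using dist2(2,4) Suc by auto
    moreover have "the_inv_into {1..} C (C k) = k" using the_inv_into_f_f[OF dist2(6)] Suc by simp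
    ultimately show ?thesis unfolding u2_def extC_def using Suc by auto
  qed
  have uD: "u2 (D (k+1)) = dd k" for k
  proof -
    have "D (k+1) \<noteq> x2" "D (k+1) \<noteq> y2" "D (k+1) \<notin> C ` {1..}" using dist2(3,5,8) by auto
    moreover have "the_inv_into {1..} D (D (k+1)) = k+1" using the_inv_into_f_f[OF dist2(7)] by simp
    ultimately show ?thesis unfolding u2_def by auto
  qed
  have uE: "u3 (extE z3 E k) = e k" for k
  proof (cases k)
    case 0 then show ?thesis using dist3(1) unfolding u3_def extE_def by auto
  next
    case (Suc k')
    have "E k \<noteq> x3" "E k \<noteq> z3" using dist3(2,3) Suc by auto
    moreover have "the_inv_into {1..} E (E k) = k" using the_inv_into_f_f[OF dist3(4)] Suc by simp
    ultimately show ?thesis unfolding u3_def extE_def using Suc by auto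
  qed
  have uC': "u2 (C (k+1)) = c (k+1)" for k using uC[of "k+1"] by (simp add: extC_def)
  have uE': "u3 (E (k+1)) = e (k+1)" for k using uE[of "k+1"] by (simp add: extE_def)
  have ux: "u1 x1 = 0" "u2 x2 = F 1" "u3 x3 = 0" unfolding u1_def u2_def u3_def by auto
  have uy: "u1 y1 = F 2 - c 0" "u2 y2 = c 0" "u3 z3 = e 0"
    using dist1(1) dist2(1) dist3(1) unfolding u1_def u2_def u3_def by auto
  have key: "2 * e (k+1) = e k + H k" for k using erec[of k] unfolding c_def by (simp add: field_simps)
  have eq: "F i = u1 (fst (a i)) + u2 (fst (snd (a i))) + u3 (snd (snd (a i)))" if i: "1 \<le> i" for i
  proof (rule idx_cases[OF i])
    assume "i = 1" then show ?thesis by (simp add: a_small ux)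
  next
    assume "i = 2" then show ?thesis by (simp add: a_small ux uy)
  next
    assume "i = 3" then show ?thesis
      by (simp add: a_small ux uy c_def e0' e0_def field_simps; simp add: algebra_simps)
  next
    fix k assume "i = 5*k+4" then show ?thesis by (simp only: a_blk fst_conv snd_conv uA uC' uE') (simp add: al_def)
  next
    fix k assume "i = 5*k+5" then show ?thesis
      using key[of k] by (simp only: a_blk fst_conv snd_conv uB uD uE') (simp add: be_def dd_def al_def H_def algebra_simps)
  next
    fix k assume "i = 5*k+6" then show ?thesis by (simp only: a_blk fst_conv snd_conv uA uD uE) (simp add: dd_def)
  next
    fix k assume "i = 5*k+7" then show ?thesis by (simp only: a_blk fst_conv snd_conv uB uC' ux) (simp add: be_def)
  next
    fix k assume "i = 5*k+8" then show ?thesis using erec[of k] by (simp only: a_blk fst_conv snd_conv ux uC uE') simp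
  qed
  show "\<exists>u1 u2 u3. \<forall>w1 w2 w3. (w1, w2, w3) \<in> a ` {1..} \<longrightarrow> f (w1, w2, w3) = u1 w1 + u2 w2 + u3 w3"
  proof (intro exI allI impI)
    fix w1 w2 w3 assume "(w1, w2, w3) \<in> a ` {1..}"
    then obtain i where i: "1 \<le> i" "a i = (w1,w2,w3)" by auto
    show "f (w1, w2, w3) = u1 w1 + u2 w2 + u3 w3" using eq[OF i(1)] i(2) unfolding F_def by simp
  qed
qed


lemma T_inf: "infinite (a ` {1..})"
  using a_inj by (simp add: finite_image_iff infinite_Ici)

lemma full_T: "full X1 X2 X3 (a ` {1..})"
  unfolding full_def
proof (intro conjI good_T allI impI)
  fix S' assume h: "a ` {1..} \<subseteq> S' \<and> S' \<subseteq> proj1 (a ` {1..}) \<times> proj2 (a ` {1..}) \<times> proj3 (a ` {1..}) \<and> good X1 X2 X3 S'"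
  show "S' = a ` {1..}"
  proof (rule ccontr)
    assume "S' \<noteq> a ` {1..}"
    then obtain w where wS: "w \<in> S'" and wT: "w \<notin> a ` {1..}" using h by blast
    obtain w1 w2 w3 where ww: "w = (w1,w2,w3)" by (cases w) auto
    have gS: "good X1 X2 X3 S'" using h by blast
    have "\<forall>f :: 'a \<times> 'b \<times> 'c \<Rightarrow> complex. \<exists>u1 u2 u3. \<forall>v1 v2 v3. (v1,v2,v3) \<in> S' \<longrightarrow> f (v1,v2,v3) = u1 v1 + u2 v2 + u3 v3"
      using gS unfolding good_def by (rule conjunct2)
    from spec[OF this, of "\<lambda>v. if v = w then 1 else (0::complex)"]
    obtain u1 u2 u3 where u: "\<forall>v1 v2 v3. (v1,v2,v3) \<in> S' \<longrightarrow> (\<lambda>v. if v = w then 1 else (0::complex)) (v1,v2,v3) = u1 v1 + u2 v2 + u3 v3"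
      by blast
    have z: "u1 (fst (a i)) + u2 (fst (snd (a i))) + u3 (snd (snd (a i))) = 0" if "1 \<le> i" for i
    proof -
      have "a i \<in> a ` {1..}" using that by simp
      then have "a i \<in> S'" using h by blast
      moreover have "a i \<noteq> w" using wT \<open>a i \<in> a ` {1..}\<close> by metis
      ultimately show ?thesis using u[rule_format, of "fst (a i)" "fst (snd (a i))" "snd (snd (a i))"] by simp
    qed
    have "(w1,w2,w3) \<in> proj1 (a ` {1..}) \<times> proj2 (a ` {1..}) \<times> proj3 (a ` {1..})" using h wS ww by blast
    then have "w1 \<in> proj1 (a ` {1..})" "w2 \<in> proj2 (a ` {1..})" "w3 \<in> proj3 (a ` {1..})" by auto
    then obtain i j l where ijl: "1 \<le> i" "w1 = fst (a i)" "1 \<le> j" "w2 = fst (snd (a j))" "1 \<le> l" "w3 = snd (snd (a l))"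
      unfolding proj1_def proj2_def proj3_def by auto
    have "u1 w1 + u2 w2 + u3 w3 = 0"
      using zero_on_T[of u1 u2 u3, OF z] ijl by simp
    moreover have "(\<lambda>v. if v = w then 1 else (0::complex)) (w1,w2,w3) = u1 w1 + u2 w2 + u3 w3"
      using u wS ww by blast
    then have "u1 w1 + u2 w2 + u3 w3 = 1" using ww by simp
    ultimately show False by simp
  qed
qed

lemma related_T: assumes p: "p \<in> a ` {1..}" and q: "q \<in> a ` {1..}"
  shows "related X1 X2 X3 (a ` {1..}) p q \<longleftrightarrow> p = q"
proof
  assume r: "related X1 X2 X3 (a ` {1..}) p q"
  show "p = q"
  proof (rule ccontr)
    assume pq: "p \<noteq> q"
    obtain F where F: "finite F" "F \<subseteq> a ` {1..}" "full X1 X2 X3 F" "p \<in> F" "q \<in> F"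
      using r unfolding related_def by blast
    define I where "I = {i. 1 \<le> i \<and> a i \<in> F}"
    have aI: "a ` I = F" using F(2) unfolding I_def by auto
    have iI: "inj_on a I" using a_inj by (rule inj_on_subset) (auto simp: I_def)
    have fI: "finite I" using F(1) aI iI by (metis finite_image_iff)
    have "card {p,q} \<le> card F" using F by (intro card_mono) auto
    then have "2 \<le> card I" using pq card_image[OF iI] aI by simp
    then have "NF F" using NF_main[OF fI] aI by (auto simp: I_def)
    moreover have "good X1 X2 X3 F" using good_subset[OF good_T F(2)] .
    ultimately show False using NF_not_full F(3) by blast
  qed
next
  assume "p = q"
  moreover have "full X1 X2 X3 {p}" using p T_sub by (auto intro: full_single)
  ultimately show "related X1 X2 X3 (a ` {1..}) p q" unfolding related_def using p by auto
qed

end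

theorem mainTheorem5:
  fixes X1 :: "'a set" and X2 :: "'b set" and X3 :: "'c set"
    and x1 y1 :: 'a and x2 y2 :: 'b and x3 z3 :: 'c
    and A B :: "nat \<Rightarrow> 'a" and C D :: "nat \<Rightarrow> 'b" and E :: "nat \<Rightarrow> 'c"
  assumes inX1: "x1 \<in> X1" "y1 \<in> X1" "A ` {1..} \<subseteq> X1" "B ` {1..} \<subseteq> X1"
    and inX2: "x2 \<in> X2" "y2 \<in> X2" "C ` {1..} \<subseteq> X2" "D ` {1..} \<subseteq> X2"
    and inX3: "x3 \<in> X3" "z3 \<in> X3" "E ` {1..} \<subseteq> X3"
    and dist1: "x1 \<noteq> y1" "x1 \<notin> A ` {1..}" "x1 \<notin> B ` {1..}" "y1 \<notin> A ` {1..}" "y1 \<notin> B ` {1..}"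
      "inj_on A {1..}" "inj_on B {1..}" "A ` {1..} \<inter> B ` {1..} = {}"
    and dist2: "x2 \<noteq> y2" "x2 \<notin> C ` {1..}" "x2 \<notin> D ` {1..}" "y2 \<notin> C ` {1..}" "y2 \<notin> D ` {1..}"
      "inj_on C {1..}" "inj_on D {1..}" "C ` {1..} \<inter> D ` {1..} = {}"
    and dist3: "x3 \<noteq> z3" "x3 \<notin> E ` {1..}" "z3 \<notin> E ` {1..}" "inj_on E {1..}"
  defines "T \<equiv> Tset x1 y1 x2 y2 x3 z3 A B C D E"
  shows "good X1 X2 X3 T \<and> full X1 X2 X3 T
      \<and> full_components X1 X2 X3 T = {T}
      \<and> (\<forall>p \<in> T. {q \<in> T. related X1 X2 X3 T p q} = {p})
      \<and> (\<forall>R \<in> related_components X1 X2 X3 T. \<exists>p. R = {p})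
      \<and> infinite (related_components X1 X2 X3 T)"
proof -
  interpret TC X1 X2 X3 x1 y1 x2 y2 x3 z3 A B C D E
    by (rule TC.intro) (fact inX1 inX2 inX3 dist1 dist2 dist3)+
  have Tdef: "T = aseq x1 y1 x2 y2 x3 z3 A B C D E ` {1..}" unfolding T_def Tset_def by (rule refl)
  have g: "good X1 X2 X3 T" unfolding Tdef by (rule good_T)
  have f: "full X1 X2 X3 T" unfolding Tdef by (rule full_T)
  have fc: "full_components X1 X2 X3 T = {T}"
  proof (rule set_eqI)
    fix F
    show "F \<in> full_components X1 X2 X3 T \<longleftrightarrow> F \<in> {T}"
    proof
      assume "F \<in> full_components X1 X2 X3 T"
      then have "F \<subseteq> T" "\<forall>F'. F \<subseteq> F' \<and> F' \<subseteq> T \<and> full X1 X2 X3 F' \<longrightarrow> F' = F"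
        unfolding full_components_def by auto
      then have "T = F" using f by blast
      then show "F \<in> {T}" by simp
    next
      assume "F \<in> {T}"
      then have "F = T" by simp
      then show "F \<in> full_components X1 X2 X3 T" unfolding full_components_def using f by auto
    qed
  qed
  have rel: "\<forall>p \<in> T. {q \<in> T. related X1 X2 X3 T p q} = {p}"
  proof
    fix p assume p: "p \<in> T"
    show "{q \<in> T. related X1 X2 X3 T p q} = {p}"
    proof (rule set_eqI)
      fix q
      show "q \<in> {q \<in> T. related X1 X2 X3 T p q} \<longleftrightarrow> q \<in> {p}"
        using related_T[of p q] p unfolding Tdef by auto
    qed
  qed
  have rc: "related_components X1 X2 X3 T = (\<lambda>p. {p}) ` T"
  proof -
    have "related_components X1 X2 X3 T = {{q \<in> T. related X1 X2 X3 T p q} | p. p \<in> T}"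
      unfolding related_components_def by (rule refl)
    also have "\<dots> = {{p} | p. p \<in> T}" using rel by (metis (no_types, lifting))
    also have "\<dots> = (\<lambda>p. {p}) ` T" by (rule Setcompr_eq_image)
    finally show ?thesis .
  qed
  have inf: "infinite T" unfolding Tdef by (rule T_inf)
  have inj: "inj_on (\<lambda>p. {p}) T" by (rule inj_onI) simp
  have inf2: "infinite ((\<lambda>p. {p}) ` T)" using inf finite_imageD[OF _ inj] by blast
  have r5: "\<forall>R \<in> related_components X1 X2 X3 T. \<exists>p. R = {p}" unfolding rc by blast
  show ?thesis using g f fc rel r5 inf2 unfolding rc by blast
qed

end
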